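(* Let $(x_K)_{K\ge1}\subseteq\{0,1\}^{\mathbb Z}$ be a coordinatewise non-increasing sequence with coordinatewise limit $x_\infty$, and suppose $(x_K)$ is good: there is an increasing sequence $(N_i)$ such that for every $K\in\mathbb N\cup\{\infty\}$, $x_K$ is quasi-generic along $(N_i)$ for some measure $\nu_K$ (i.e. $\frac1{N_i}\sum_{n\le N_i}\delta_{\sigma^nx_K}\to\nu_K$ weakly), and $\nu_K(1)\to\nu_\infty(1)$ as $K\to\infty$. Then $\nu_K\to\nu_\infty$ weakly.
   Context: $\sigma$ is the left shift on $\{0,1\}^{\mathbb Z}$; for a measure $\mu$ on $\{0,1\}^{\mathbb Z}$, $\mu(1)=\mu(\{x:x_0=1\})$. *)

theory Defs
  imports "HOL-Probability.Probability"
begin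

text \<open>Points of {0,1}^Z are functions int => bool (True = 1), with the product
topology (Function_Topology) and its Borel sigma-algebra.\<close>

type_synonym config = "int \<Rightarrow> bool"

definition shift :: "config \<Rightarrow> config" where
  "shift x = (\<lambda>m. x (m + 1))"

definition weak_conv :: "(nat \<Rightarrow> config measure) \<Rightarrow> config measure \<Rightarrow> bool" where
  "weak_conv \<mu> \<nu> \<longleftrightarrow>
     (\<forall>f :: config \<Rightarrow> real. continuous_on UNIV f \<longrightarrow> bounded (range f) \<longrightarrow>
        ((\<lambda>k. integral\<^sup>L (\<mu> k) f) \<longlongrightarrow> integral\<^sup>L \<nu> f) sequentially)"

definition quasi_generic_along :: "config \<Rightarrow> (nat \<Rightarrow> nat) \<Rightarrow> config measure \<Rightarrow> bool" where
  "quasi_generic_along x N \<nu> \<longleftrightarrow>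
     (\<forall>f :: config \<Rightarrow> real. continuous_on UNIV f \<longrightarrow> bounded (range f) \<longrightarrow>
        ((\<lambda>i. (\<Sum>n=1..N i. f ((shift ^^ n) x)) / real (N i)) \<longlongrightarrow> integral\<^sup>L \<nu> f) sequentially)"

definition borel_prob :: "config measure \<Rightarrow> bool" where
  "borel_prob \<nu> \<longleftrightarrow> prob_space \<nu> \<and> sets \<nu> = sets borel"

definition one_mass :: "config measure \<Rightarrow> real" where
  "one_mass \<nu> = measure \<nu> {x. x 0}"

end

theory Submission
  imports Defs
begin
lemma compact_config: "compact (UNIV :: config set)"
proof -
  have "compact_space (euclidean :: bool topology)"
    by (simp add: compact_space_def finite_imp_compact)
  then have "compact_space (product_topology (\<lambda>i::int. (euclidean :: bool topology)) UNIV)"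
    by (simp add: compact_space_product_topology) 
  then show ?thesis
    by (simp add: euclidean_product_topology compact_space_def)
qed

definition cyl :: "config \<Rightarrow> nat \<Rightarrow> config set" where
  "cyl z L = {w. \<forall>m. \<bar>m\<bar> \<le> int L \<longrightarrow> w m = z m}"

lemma open_cyl: "open (cyl z L)"
proof -
  have "cyl z L = {f. \<forall>i\<in>{-int L..int L}. f (id i) \<in> {z i}}"
    unfolding cyl_def by (auto simp: abs_le_iff)
  moreover have "open {f::config. \<forall>i\<in>{-int L..int L}. f (id i) \<in> {z i}}"
    by (rule product_topology_basis') (simp_all add: discrete_topology_class.open_discrete)
  ultimately show ?thesis by simp
qed

lemma cyl_in_open:
  assumes "open (U :: config set)" "z \<in> U"
  shows "\<exists>L. cyl z L \<subseteq> U"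
proof -
  have "openin (product_topology (\<lambda>i. euclidean) UNIV) U"
    using assms(1) by (simp add: open_fun_def)
  from product_topology_open_contains_basis[OF this assms(2)]
  obtain X where X: "z \<in> (\<Pi>\<^sub>E i\<in>UNIV. X i)" "finite {i. X i \<noteq> UNIV}"
     "(\<Pi>\<^sub>E i\<in>UNIV. X i) \<subseteq> U" by auto
  define F where "F = {i. X i \<noteq> UNIV}"
  define L where "L = nat (Max (insert 0 (abs ` F)))"
  have "cyl z L \<subseteq> (\<Pi>\<^sub>E i\<in>UNIV. X i)"
  proof
    fix w assume w: "w \<in> cyl z L"
    have "w i \<in> X i" for i
    proof (cases "i \<in> F")
      case True
      then have "\<bar>i\<bar> \<le> Max (insert 0 (abs ` F))"
        using X(2) unfolding F_def by (intro Max_ge) auto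
      moreover have "0 \<le> Max (insert 0 (abs ` F))"
        using X(2) unfolding F_def by (intro Max_ge) auto
      ultimately have "\<bar>i\<bar> \<le> int L" unfolding L_def by simp
      then have "w i = z i" using w unfolding cyl_def by auto
      then show ?thesis using X(1) by auto
    next
      case False
      then show ?thesis unfolding F_def by auto
    qed
    then show "w \<in> (\<Pi>\<^sub>E i\<in>UNIV. X i)" by auto
  qed
  then show ?thesis using X(3) by blast
qed

lemma locality:
  fixes f :: "config \<Rightarrow> real"
  assumes f: "continuous_on UNIV f" and e: "e > 0"
  shows "\<exists>L. \<forall>x y. (\<forall>m. \<bar>m\<bar> \<le> int L \<longrightarrow> x m = y m) \<longrightarrow> \<bar>f x - f y\<bar> < e"
proof -
  define U where "U z = f -` {r. \<bar>r - f z\<bar> < e/2}" for z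
  have "open (U z)" for z
  proof -
    have "open {r::real. \<bar>r - f z\<bar> < e/2}"
      proof -
      have "{r::real. \<bar>r - f z\<bar> < e/2} = ball (f z) (e/2)"
        by (auto simp: dist_real_def abs_minus_commute)
      then show ?thesis by simp
    qed
    moreover have "\<forall>B. open B \<longrightarrow> open (UNIV \<inter> f -` B)"
      using continuous_on_open_vimage[OF open_UNIV, of f] f by simp
    ultimately show ?thesis unfolding U_def by (metis Int_UNIV_left)
  qed
  moreover have "z \<in> U z" for z using e unfolding U_def by simp
  ultimately have "\<forall>z. \<exists>L. cyl z L \<subseteq> U z" using cyl_in_open by blast
  from choice[OF this] obtain Lf where Lf0: "\<forall>z. cyl z (Lf z) \<subseteq> U z" by blast
  then have Lf: "\<And>z. cyl z (Lf z) \<subseteq> U z" by blast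
  have cov: "UNIV \<subseteq> \<Union> ((\<lambda>z. cyl z (Lf z)) ` UNIV)" 
  proof -
    have "z \<in> cyl z (Lf z)" for z unfolding cyl_def by simp
    then show ?thesis by blast
  qed
  obtain C where C: "finite C" "UNIV \<subseteq> \<Union> ((\<lambda>z. cyl z (Lf z)) ` C)"
    apply (rule compactE_image[OF compact_config _ cov])
     apply (rule open_cyl)
    apply blast
    done
  define L where "L = Max (insert 0 (Lf ` C))"
  show ?thesis
  proof (intro exI allI impI)
    fix x y :: config assume xy: "\<forall>m. \<bar>m\<bar> \<le> int L \<longrightarrow> x m = y m"
    obtain z where z: "z \<in> C" "x \<in> cyl z (Lf z)" using C(2) by blast
    have "Lf z \<le> L" unfolding L_def using z(1) C(1) by (intro Max_ge) auto
    then have "y \<in> cyl z (Lf z)"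
      unfolding cyl_def
    proof (intro CollectI allI impI)
      fix m assume m: "\<bar>m\<bar> \<le> int (Lf z)"
      then have "x m = z m" using z(2) unfolding cyl_def by blast
      moreover have "x m = y m" using xy m \<open>Lf z \<le> L\<close> by auto
      ultimately show "y m = z m" by simp
    qed
    then have "\<bar>f y - f z\<bar> < e/2" using Lf unfolding U_def by blast
    moreover have "\<bar>f x - f z\<bar> < e/2" using Lf z(2) unfolding U_def by blast
    ultimately show "\<bar>f x - f y\<bar> < e" by linarith
  qed
qed

lemma shift_pow: "(shift ^^ n) x = (\<lambda>m. x (m + int n))"
  by (induction n) (auto simp: shift_def algebra_simps)

lemma shift_step:
  fixes u :: "int \<Rightarrow> real"
  shows "(\<Sum>n=1..N. u (int n + (j+1))) - (\<Sum>n=1..N. u (int n + j)) = u (int N + j + 1) - u (j + 1)"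
  by (induction N) (simp_all add: sum.cl_ivl_Suc algebra_simps)

lemma lin_aux: "(a::real) \<le> b + c \<Longrightarrow> b \<le> 2 \<Longrightarrow> c \<le> 2*r \<Longrightarrow> a \<le> 2*(1+r)"
  by (simp add: algebra_simps)

lemma boundary:
  fixes u :: "int \<Rightarrow> real"
  assumes u: "\<And>m. \<bar>u m\<bar> \<le> 1"
  shows "\<bar>(\<Sum>n=1..N. u (int n + j)) - (\<Sum>n=1..N. u (int n))\<bar> \<le> 2 * \<bar>real_of_int j\<bar>"
proof -
  define S where "S j = (\<Sum>n=1..N. u (int n + j))" for j
  have step: "\<bar>S (j+1) - S j\<bar> \<le> 2" for j
  proof -
    have "S (j+1) - S j = u (int N + j + 1) - u (j + 1)"
      unfolding S_def by (rule shift_step)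
    moreover have "\<bar>u (int N + j + 1)\<bar> \<le> 1" "\<bar>u (j + 1)\<bar> \<le> 1" using u by auto
    ultimately show ?thesis by linarith
  qed
  have pos: "\<bar>S (int k) - S 0\<bar> \<le> 2 * real k" for k
  proof (induction k)
    case (Suc k)
    have "\<bar>S (int k + 1) - S (int k)\<bar> \<le> 2" by (rule step)
    moreover have eq: "int (Suc k) = int k + 1" by simp
    moreover have "\<bar>S (int k + 1) - S 0\<bar> \<le> \<bar>S (int k+1) - S (int k)\<bar> + \<bar>S (int k) - S 0\<bar>"
      using abs_triangle_ineq[of "S (int k+1) - S (int k)" "S (int k) - S 0"] by simp
    ultimately show ?case using Suc unfolding eq of_nat_Suc[where 'a=real] by (intro lin_aux)
  qed simp
  have neg: "\<bar>S (- int k) - S 0\<bar> \<le> 2 * real k" for k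
  proof (induction k)
    case (Suc k)
    have "\<bar>S (- int (Suc k) + 1) - S (- int (Suc k))\<bar> \<le> 2" by (rule step)
    then show ?case using Suc by simp
  qed simp
  have S0: "S 0 = (\<Sum>n=1..N. u (int n))" by (simp add: S_def)
  show ?thesis
  proof (cases "j \<ge> 0")
    case True
    then obtain k where k: "j = int k" using nonneg_int_cases by blast
    have "\<bar>S j - S 0\<bar> \<le> 2 * real k" using pos[of k] k by simp
    then show ?thesis unfolding S0 by (simp add: S_def k)
  next
    case False
    then obtain k where k: "j = - int k" by (metis neg_int_cases less_imp_le not_le nonneg_int_cases minus_minus neg_0_le_iff_le)
    have "\<bar>S j - S 0\<bar> \<le> 2 * real k" using neg[of k] k by simp
    then show ?thesis unfolding S0 by (simp add: S_def k)
  qed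
qed

lemma open_first: "open {y::config. y 0}"
proof -
  have "{y::config. y 0} = {f. \<forall>i\<in>{0::int}. f (id i) \<in> {True}}" by auto
  moreover have "open {f::config. \<forall>i\<in>{0::int}. f (id i) \<in> {True}}"
    by (rule product_topology_basis') (simp_all add: discrete_topology_class.open_discrete)
  ultimately show ?thesis by simp
qed

lemma int_g:
  assumes "borel_prob \<nu>"
  shows "integral\<^sup>L \<nu> (indicator {y::config. y 0} :: config \<Rightarrow> real) = one_mass \<nu>"
proof -
  have S: "sets \<nu> = sets borel" using assms unfolding borel_prob_def by auto
  have "space \<nu> = UNIV" using sets_eq_imp_space_eq[OF S] by simp
  then show ?thesis unfolding one_mass_def by simp
qed

lemma g_cont: "continuous_on UNIV (indicator {y::config. y 0} :: config \<Rightarrow> real)"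
proof -
  have "continuous_on UNIV ((\<lambda>b::bool. if b then 1 else (0::real)) \<circ> (\<lambda>y::config. y 0))"
    by (rule continuous_on_compose) simp_all
  moreover have "((\<lambda>b::bool. if b then 1 else (0::real)) \<circ> (\<lambda>y::config. y 0)) = indicator {y::config. y 0}"
    by (auto simp: indicator_def fun_eq_iff)
  ultimately show ?thesis by simp
qed

lemma g_bdd: "bounded (range (indicator {y::config. y 0} :: config \<Rightarrow> real))"
  unfolding bounded_iff by (intro exI[of _ 1]) (auto simp: indicator_def)


lemma g_shift: "(indicator {y::config. y 0} :: config \<Rightarrow> real) ((shift ^^ n) y) = (if y (int n) then 1 else 0)"
  by (simp add: shift_pow indicator_def)

lemma key:
  fixes xK xi :: config and N :: "nat \<Rightarrow> nat" and \<nu>K \<nu>i :: "config measure"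
    and f :: "config \<Rightarrow> real"
  assumes le: "\<And>m. xi m \<Longrightarrow> xK m"
    and N_mono: "strict_mono N"
    and qK: "quasi_generic_along xK N \<nu>K" and qi: "quasi_generic_along xi N \<nu>i"
    and pK: "borel_prob \<nu>K" and pi: "borel_prob \<nu>i"
    and fc: "continuous_on UNIV f" and fb: "bounded (range f)"
    and B: "\<And>y. \<bar>f y\<bar> \<le> B"
    and loc: "\<And>x y. (\<forall>m. \<bar>m\<bar> \<le> int L \<longrightarrow> x m = y m) \<Longrightarrow> \<bar>f x - f y\<bar> < e"
  shows "\<bar>integral\<^sup>L \<nu>K f - integral\<^sup>L \<nu>i f\<bar>
     \<le> e + 2*B*(\<Sum>j\<in>{-int L..int L}. one_mass \<nu>K - one_mass \<nu>i)"
proof -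
  define d where "d m = (if xK m then 1 else 0) - (if xi m then (1::real) else 0)" for m
  define J where "J = {-int L..int L}"
  have finJ: "finite J" unfolding J_def by simp
  have d01: "d m = 0 \<or> d m = 1" for m using le[of m] unfolding d_def by auto
  have dnn: "d m \<ge> 0" for m using d01[of m] by auto
  have d0: "d m = 0 \<Longrightarrow> xK m = xi m" for m using le[of m] unfolding d_def by (auto split: if_splits)
  have epos: "e > 0" using loc[of xK xK] by simp
  have Bpos: "B \<ge> 0" using B[of xK] by simp
  define avg where "avg y i = (\<Sum>n=1..N i. f ((shift^^n) y)) / real (N i)" for y i
  have FK: "avg xK \<longlonglongrightarrow> integral\<^sup>L \<nu>K f"
    using qK fc fb unfolding quasi_generic_along_def avg_def by blast
  have Fi: "avg xi \<longlonglongrightarrow> integral\<^sup>L \<nu>i f"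
    using qi fc fb unfolding quasi_generic_along_def avg_def by blast
  define g where "g = (indicator {y::config. y 0} :: config \<Rightarrow> real)"
  have gK: "(\<lambda>i. (\<Sum>n=1..N i. g ((shift^^n) xK)) / real (N i)) \<longlonglongrightarrow> one_mass \<nu>K"
  proof -
    have "(\<lambda>i. (\<Sum>n=1..N i. g ((shift^^n) xK)) / real (N i)) \<longlonglongrightarrow> integral\<^sup>L \<nu>K g"
      using qK g_cont g_bdd unfolding quasi_generic_along_def g_def by blast
    moreover have "integral\<^sup>L \<nu>K g = one_mass \<nu>K" using int_g[OF pK] g_def by simp
    ultimately show ?thesis by simp
  qed
  have gi: "(\<lambda>i. (\<Sum>n=1..N i. g ((shift^^n) xi)) / real (N i)) \<longlonglongrightarrow> one_mass \<nu>i"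
  proof -
    have "(\<lambda>i. (\<Sum>n=1..N i. g ((shift^^n) xi)) / real (N i)) \<longlonglongrightarrow> integral\<^sup>L \<nu>i g"
      using qi g_cont g_bdd unfolding quasi_generic_along_def g_def by blast
    moreover have "integral\<^sup>L \<nu>i g = one_mass \<nu>i" using int_g[OF pi] g_def by simp
    ultimately show ?thesis by simp
  qed
  have A0: "(\<lambda>i. (\<Sum>n=1..N i. d (int n)) / real (N i)) \<longlonglongrightarrow> one_mass \<nu>K - one_mass \<nu>i"
  proof -
    have "(\<lambda>i. (\<Sum>n=1..N i. g ((shift^^n) xK)) / real (N i) - (\<Sum>n=1..N i. g ((shift^^n) xi)) / real (N i))
       = (\<lambda>i. (\<Sum>n=1..N i. d (int n)) / real (N i))"
      by (simp add: g_def g_shift d_def sum_subtractf diff_divide_distrib)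
    then show ?thesis using tendsto_diff[OF gK gi] by simp
  qed
  have Nlim: "filterlim (\<lambda>i. real (N i)) at_top sequentially"
    using filterlim_compose[OF filterlim_real_sequentially filterlim_subseq[OF N_mono]]
    by (simp add: o_def)
  have Aj: "(\<lambda>i. (\<Sum>n=1..N i. d (int n + j)) / real (N i)) \<longlonglongrightarrow> one_mass \<nu>K - one_mass \<nu>i" for j
  proof -
    have z0: "(\<lambda>i. 2 * \<bar>real_of_int j\<bar> / real (N i)) \<longlonglongrightarrow> 0"
      by (rule tendsto_divide_0[OF tendsto_const filterlim_at_top_imp_at_infinity[OF Nlim]])
    have z: "(\<lambda>i. ((\<Sum>n=1..N i. d (int n + j)) - (\<Sum>n=1..N i. d (int n))) / real (N i)) \<longlonglongrightarrow> 0"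
    proof (rule Lim_null_comparison[OF _ z0], rule always_eventually, rule allI)
      fix i
      have "\<bar>(\<Sum>n=1..N i. d (int n + j)) - (\<Sum>n=1..N i. d (int n))\<bar> \<le> 2 * \<bar>real_of_int j\<bar>"
      proof (rule boundary)
        fix m show "\<bar>d m\<bar> \<le> 1" using d01[of m] by auto
      qed
      then show "norm (((\<Sum>n=1..N i. d (int n + j)) - (\<Sum>n=1..N i. d (int n))) / real (N i))
          \<le> 2 * \<bar>real_of_int j\<bar> / real (N i)"
        by (simp add: divide_right_mono)
    qed
    have "(\<lambda>i. (\<Sum>n=1..N i. d (int n)) / real (N i) + ((\<Sum>n=1..N i. d (int n + j)) - (\<Sum>n=1..N i. d (int n))) / real (N i))
        = (\<lambda>i. (\<Sum>n=1..N i. d (int n + j)) / real (N i))"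
      by (simp add: add_divide_distrib[symmetric])
    then show ?thesis using tendsto_add[OF A0 z] by simp
  qed
  have Glim: "(\<lambda>i. e + 2*B*(\<Sum>j\<in>J. (\<Sum>n=1..N i. d (int n + j)) / real (N i)))
      \<longlonglongrightarrow> e + 2*B*(\<Sum>j\<in>J. one_mass \<nu>K - one_mass \<nu>i)"
    by (intro tendsto_intros Aj)
  have Flim: "(\<lambda>i. \<bar>avg xK i - avg xi i\<bar>) \<longlonglongrightarrow> \<bar>integral\<^sup>L \<nu>K f - integral\<^sup>L \<nu>i f\<bar>"
    by (intro tendsto_intros FK Fi)
  have pt: "\<bar>f ((shift^^n) xK) - f ((shift^^n) xi)\<bar> \<le> e + 2*B*(\<Sum>j\<in>J. d (int n + j))" for n
  proof (cases "\<forall>j\<in>J. d (int n + j) = 0")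
    case True
    have "\<forall>m. \<bar>m\<bar> \<le> int L \<longrightarrow> (shift^^n) xK m = (shift^^n) xi m"
    proof (intro allI impI)
      fix m :: int assume "\<bar>m\<bar> \<le> int L"
      then have "m \<in> J" unfolding J_def by auto
      then have "d (int n + m) = 0" using True by blast
      then have "xK (int n + m) = xi (int n + m)" by (rule d0)
      then show "(shift^^n) xK m = (shift^^n) xi m" by (simp add: shift_pow add.commute)
    qed
    then have "\<bar>f ((shift^^n) xK) - f ((shift^^n) xi)\<bar> < e" by (rule loc)
    moreover have "(\<Sum>j\<in>J. d (int n + j)) \<ge> 0" by (intro sum_nonneg dnn)
    moreover have "2*B*(\<Sum>j\<in>J. d (int n + j)) \<ge> 0" using Bpos calculation(2) by simp
    ultimately show ?thesis by linarith
  next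
    case False
    then obtain j where j: "j \<in> J" "d (int n + j) \<noteq> 0" by blast
    then have "d (int n + j) = 1" using d01 by blast
    then have "1 \<le> (\<Sum>j\<in>J. d (int n + j))"
      using member_le_sum[of j J "\<lambda>j. d (int n + j)"] j(1) finJ dnn by simp
    then have "2*B \<le> 2*B*(\<Sum>j\<in>J. d (int n + j))" using Bpos
      using mult_left_mono[of 1 "\<Sum>j\<in>J. d (int n + j)" "2*B"] by simp
    moreover have "\<bar>f ((shift^^n) xK) - f ((shift^^n) xi)\<bar> \<le> 2*B"
      using B[of "(shift^^n) xK"] B[of "(shift^^n) xi"] by linarith
    ultimately show ?thesis using epos by linarith
  qed
  have bound: "\<bar>avg xK i - avg xi i\<bar> \<le> e + 2*B*(\<Sum>j\<in>J. (\<Sum>n=1..N i. d (int n + j)) / real (N i))" for i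
  proof (cases "N i = 0")
    case True
    then show ?thesis using epos by (simp add: avg_def)
  next
    case False
    then have Npos: "real (N i) > 0" by simp
    have "avg xK i - avg xi i = (\<Sum>n=1..N i. f ((shift^^n) xK) - f ((shift^^n) xi)) / real (N i)"
      unfolding avg_def by (simp add: sum_subtractf diff_divide_distrib)
    then have "\<bar>avg xK i - avg xi i\<bar> = \<bar>\<Sum>n=1..N i. f ((shift^^n) xK) - f ((shift^^n) xi)\<bar> / real (N i)"
      using Npos by simp
    also have "\<dots> \<le> (\<Sum>n=1..N i. \<bar>f ((shift^^n) xK) - f ((shift^^n) xi)\<bar>) / real (N i)"
      using Npos by (intro divide_right_mono sum_abs) simp
    also have "\<dots> \<le> (\<Sum>n=1..N i. e + 2*B*(\<Sum>j\<in>J. d (int n + j))) / real (N i)"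
      using Npos by (intro divide_right_mono sum_mono pt) simp
    also have "(\<Sum>n=1..N i. e + 2*B*(\<Sum>j\<in>J. d (int n + j))) = real (N i) * e + 2*B*(\<Sum>j\<in>J. \<Sum>n=1..N i. d (int n + j))"
    proof -
      have "(\<Sum>n=1..N i. e + 2*B*(\<Sum>j\<in>J. d (int n + j))) = (\<Sum>n=1..N i. e) + 2*B*(\<Sum>n=1..N i. \<Sum>j\<in>J. d (int n + j))"
        by (simp add: sum.distrib sum_distrib_left)
      also have "(\<Sum>n=1..N i. \<Sum>j\<in>J. d (int n + j)) = (\<Sum>j\<in>J. \<Sum>n=1..N i. d (int n + j))"
        by (rule sum.swap)
      finally show ?thesis by simp
    qed
    also have "(real (N i) * e + 2*B*(\<Sum>j\<in>J. \<Sum>n=1..N i. d (int n + j))) / real (N i)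
        = e + 2*B*(\<Sum>j\<in>J. (\<Sum>n=1..N i. d (int n + j)) / real (N i))"
    proof -
      have f1: "(\<Sum>j\<in>J. \<Sum>n=1..N i. d (int n + j)) / real (N i) = (\<Sum>j\<in>J. (\<Sum>n=1..N i. d (int n + j)) / real (N i))"
        by (rule sum_divide_distrib)
      have f2: "(real (N i) * e + 2*B*X) / real (N i) = e + 2*B*(X / real (N i))" for X
        using Npos by (simp add: add_divide_distrib)
      show ?thesis by (simp only: f1 f2)
    qed
    finally show ?thesis .
  qed
  show ?thesis
    using tendsto_le[OF sequentially_bot Glim Flim] bound unfolding J_def by simp
qed


theorem lemma3p8:
  fixes x :: "nat \<Rightarrow> config" and xinf :: config
    and N :: "nat \<Rightarrow> nat"
    and \<nu> :: "nat \<Rightarrow> config measure" and \<nu>inf :: "config measure"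
  assumes noninc: "\<And>K m. x (Suc K) m \<longrightarrow> x K m"
    and lim: "\<And>m. ((\<lambda>K. x K m) \<longlongrightarrow> xinf m) sequentially"
    and N_mono: "strict_mono N"
    and \<nu>_prob: "\<And>K. borel_prob (\<nu> K)" and \<nu>inf_prob: "borel_prob \<nu>inf"
    and qg: "\<And>K. quasi_generic_along (x K) N (\<nu> K)"
    and qginf: "quasi_generic_along xinf N \<nu>inf"
    and mass: "((\<lambda>K. one_mass (\<nu> K)) \<longlongrightarrow> one_mass \<nu>inf) sequentially"
  shows "weak_conv \<nu> \<nu>inf"
proof -
  have dec: "x (K + k) m \<Longrightarrow> x K m" for K k m
  proof (induction k)
    case (Suc k)
    then show ?case using noninc[of "K + k" m] by simp
  qed simp
  have le: "x K m" if "xinf m" for K m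
  proof -
    have "\<forall>\<^sub>F K in sequentially. x K m = xinf m"
      using lim[of m] by (simp add: tendsto_discrete)
    then obtain K1 where K1: "\<And>K. K \<ge> K1 \<Longrightarrow> x K m = xinf m"
      unfolding eventually_sequentially by blast
    have "x (K + K1) m" using K1[of "K + K1"] that by simp
    then show ?thesis by (rule dec)
  qed
  show ?thesis unfolding weak_conv_def
  proof (intro allI impI)
    fix f :: "config \<Rightarrow> real"
    assume fc: "continuous_on UNIV f" and fb: "bounded (range f)"
    obtain B where B: "\<And>y. \<bar>f y\<bar> \<le> B"
      using fb unfolding bounded_iff by auto
    have Bpos: "B \<ge> 0" using B[of xinf] by simp
    show "(\<lambda>K. integral\<^sup>L (\<nu> K) f) \<longlonglongrightarrow> integral\<^sup>L \<nu>inf f"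
    proof (rule LIMSEQ_I)
      fix r :: real assume r: "r > 0"
      obtain L where L: "\<forall>x y. (\<forall>m. \<bar>m\<bar> \<le> int L \<longrightarrow> x m = y m) \<longrightarrow> \<bar>f x - f y\<bar> < r/2"
        using locality[OF fc, of "r/2"] r by auto
      define c where "c = 2*B*real (card {-int L..int L})"
      have cpos: "c \<ge> 0" unfolding c_def using Bpos by simp
      have r'pos: "r / (4*(c+1)) > 0" using r cpos by simp
      obtain K0 where K0: "\<And>K. K \<ge> K0 \<Longrightarrow> norm (one_mass (\<nu> K) - one_mass \<nu>inf) < r / (4*(c+1))"
        using LIMSEQ_D[OF mass r'pos] by blast
      show "\<exists>no. \<forall>n\<ge>no. norm (integral\<^sup>L (\<nu> n) f - integral\<^sup>L \<nu>inf f) < r"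
      proof (intro exI allI impI)
        fix K assume K: "K \<ge> K0"
        have "\<bar>integral\<^sup>L (\<nu> K) f - integral\<^sup>L \<nu>inf f\<bar>
            \<le> r/2 + 2*B*(\<Sum>j\<in>{-int L..int L}. one_mass (\<nu> K) - one_mass \<nu>inf)"
          by (rule key[OF le N_mono qg qginf \<nu>_prob \<nu>inf_prob fc fb B]) (use L in auto)
        also have "\<dots> = r/2 + c * (one_mass (\<nu> K) - one_mass \<nu>inf)"
          unfolding c_def by simp
        also have "\<dots> \<le> r/2 + c * (r / (4*(c+1)))"
        proof -
          have "one_mass (\<nu> K) - one_mass \<nu>inf \<le> r / (4*(c+1))"
            using K0[OF K] by simp
          from add_left_mono[OF mult_left_mono[OF this cpos], of "r/2"] show ?thesis .
        qed
        also have "\<dots> < r"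
        proof -
          have "c * (r / (4*(c+1))) \<le> (c+1) * (r / (4*(c+1)))"
            by (rule mult_right_mono) (use r'pos in auto)
          also have "\<dots> = r/4" using cpos by (simp add: field_simps)
          finally show ?thesis using r by linarith
        qed
        finally show "norm (integral\<^sup>L (\<nu> K) f - integral\<^sup>L \<nu>inf f) < r" by simp
      qed
    qed
  qed
qed

end
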